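(* Let $\Gamma$ be a graph with maximum degree $\Delta_\Gamma$, and let $V^*\subseteq V(\Gamma)$ be a random vertex set containing each vertex of $\Gamma$ independently with probability $q\le 1/\Delta_\Gamma$. Then with probability at least $1-\exp\!\big(-q^2e(\Gamma)/200\big)$, the induced subgraph $\Gamma[V^*]$ contains a matching of size at least $q^2e(\Gamma)/20$.
   Context: $e(\Gamma)$ denotes the number of edges of $\Gamma$. *)

theory Defs
  imports "HOL-Probability.Probability"
begin

definition simple_graph :: "'a set \<Rightarrow> 'a set set \<Rightarrow> bool" where
  "simple_graph V E \<longleftrightarrow> finite V \<and> (\<forall>e\<in>E. e \<subseteq> V \<and> card e = 2)"

definition degree :: "'a set set \<Rightarrow> 'a \<Rightarrow> nat" where
  "degree E v = card {e\<in>E. v \<in> e}"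

definition max_degree :: "'a set \<Rightarrow> 'a set set \<Rightarrow> nat" where
  "max_degree V E = Max (insert 0 (degree E ` V))"

definition induced_edges :: "'a set set \<Rightarrow> 'a set \<Rightarrow> 'a set set" where
  "induced_edges E S = {e\<in>E. e \<subseteq> S}"

definition matching :: "'a set set \<Rightarrow> 'a set set \<Rightarrow> bool" where
  "matching E M \<longleftrightarrow> M \<subseteq> E \<and> (\<forall>e\<in>M. \<forall>f\<in>M. e \<noteq> f \<longrightarrow> e \<inter> f = {})"

definition random_subset :: "'a set \<Rightarrow> real \<Rightarrow> 'a set pmf" where
  "random_subset V q = map_pmf (\<lambda>f. {v\<in>V. f v}) (Pi_pmf V False (\<lambda>_. bernoulli_pmf q))"

end

theory Submission
  imports Defs
begin

lemma set_rs: "set_pmf (random_subset A q) \<subseteq> Pow A"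
  unfolding random_subset_def by auto

lemma finite_set_rs: "finite A \<Longrightarrow> finite (set_pmf (random_subset A q))"
  using set_rs by (meson finite_Pow_iff finite_subset)

lemma rs_insert:
  assumes "finite A" "x \<notin> A"
  shows "random_subset (insert x A) q = map_pmf (\<lambda>(b,S). if b then insert x S else S)
           (pair_pmf (bernoulli_pmf q) (random_subset A q))"
  unfolding random_subset_def
  using assms
  apply (subst Pi_pmf_insert, simp_all)
  apply (simp add: pair_map_pmf2 pmf.map_comp o_def)
  apply (intro map_pmf_cong refl)
  apply (auto simp: case_prod_unfold)
  done

lemma rs_union:
  assumes "finite A" "finite B" "A \<inter> B = {}"
  shows "random_subset (A \<union> B) q = map_pmf (\<lambda>(S,T). S \<union> T)
           (pair_pmf (random_subset A q) (random_subset B q))"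
  unfolding random_subset_def
  using assms
  apply (subst Pi_pmf_union, simp_all)
  apply (simp add: map_pair[symmetric] pmf.map_comp o_def)
  apply (intro map_pmf_cong refl)
  apply (auto simp: case_prod_unfold)
  done

lemma exp_pair:
  fixes f :: "_ \<Rightarrow> real"
  assumes "finite (set_pmf A)" "finite (set_pmf B)"
  shows "measure_pmf.expectation (pair_pmf A B) f =
         measure_pmf.expectation A (\<lambda>a. measure_pmf.expectation B (\<lambda>b. f (a,b)))"
proof -
  have "measure_pmf.expectation (pair_pmf A B) f = (\<Sum>x\<in>set_pmf A \<times> set_pmf B. f x * pmf (pair_pmf A B) x)"
    by (rule integral_measure_pmf_real) (use assms in auto)
  also have "\<dots> = (\<Sum>a\<in>set_pmf A. \<Sum>b\<in>set_pmf B. f (a,b) * (pmf A a * pmf B b))"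
    by (subst sum.cartesian_product, rule sum.cong) (auto simp: pmf_pair)
  also have "\<dots> = (\<Sum>a\<in>set_pmf A. (\<Sum>b\<in>set_pmf B. f (a,b) * pmf B b) * pmf A a)"
    by (rule sum.cong[OF refl]) (simp add: sum_distrib_right sum_distrib_left mult_ac)
  also have "\<dots> = (\<Sum>a\<in>set_pmf A. measure_pmf.expectation B (\<lambda>b. f (a,b)) * pmf A a)"
    by (intro sum.cong refl arg_cong2[where f="(*)"], rule integral_measure_pmf_real[symmetric]) (use assms in auto)
  also have "\<dots> = measure_pmf.expectation A (\<lambda>a. measure_pmf.expectation B (\<lambda>b. f (a,b)))"
    by (rule integral_measure_pmf_real[symmetric]) (use assms in auto)
  finally show ?thesis .
qed

lemma exp_mono_pmf:
  fixes f g :: "_ \<Rightarrow> real"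
  assumes "finite (set_pmf p)" "\<And>x. x \<in> set_pmf p \<Longrightarrow> f x \<le> g x"
  shows "measure_pmf.expectation p f \<le> measure_pmf.expectation p g"
  using assms by (intro integral_mono_AE integrable_measure_pmf_finite AE_pmfI) auto

lemma exp_cong_pmf:
  fixes f g :: "_ \<Rightarrow> real"
  assumes "\<And>x. x \<in> set_pmf p \<Longrightarrow> f x = g x"
  shows "measure_pmf.expectation p f = measure_pmf.expectation p g"
  using assms by (intro integral_cong_AE AE_pmfI) auto

lemma exp_le_1:
  fixes f :: "_ \<Rightarrow> real"
  assumes "finite (set_pmf p)" "\<And>x. f x \<le> 1"
  shows "measure_pmf.expectation p f \<le> 1"
proof -
  have "measure_pmf.expectation p f \<le> measure_pmf.expectation p (\<lambda>_. 1)"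
    using assms by (intro exp_mono_pmf) auto
  then show ?thesis by simp
qed

definition nu :: "'a set set \<Rightarrow> 'a set \<Rightarrow> nat" where
  "nu E S = Max (card ` {M. matching (induced_edges E S) M})"

lemma finite_matchings: "finite E \<Longrightarrow> finite {M. matching (induced_edges E S) M}"
  by (rule finite_subset[of _ "Pow E"]) (auto simp: matching_def induced_edges_def)

lemma nu_ge: "finite E \<Longrightarrow> matching (induced_edges E S) M \<Longrightarrow> card M \<le> nu E S"
  unfolding nu_def by (rule Max_ge) (auto simp: finite_matchings)

lemma nu_ex: "finite E \<Longrightarrow> \<exists>M. matching (induced_edges E S) M \<and> card M = nu E S"
proof -
  assume "finite E"
  have "{} \<in> {M. matching (induced_edges E S) M}" by (simp add: matching_def)
  then have "nu E S \<in> card ` {M. matching (induced_edges E S) M}"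
    unfolding nu_def using \<open>finite E\<close> by (intro Max_in) (auto simp: finite_matchings)
  then show ?thesis by auto
qed

lemma nu_step:
  assumes "finite E" "E2 \<subseteq> E" "v \<notin> U" "T \<inter> U = {}" "\<forall>u\<in>T. {v,u} \<in> E"
  shows "nu E2 U + (if T = {} then 0 else 1) \<le> nu E (insert v (T \<union> U))"
proof -
  have fE2: "finite E2" using assms finite_subset by blast
  obtain M where M: "matching (induced_edges E2 U) M" "card M = nu E2 U"
    using nu_ex[OF fE2] by blast
  have fM: "finite M" using M(1) fE2 by (auto simp: matching_def induced_edges_def intro: finite_subset)
  have MU: "\<forall>e\<in>M. e \<subseteq> U \<and> e \<in> E" using M(1) assms(2) by (auto simp: matching_def induced_edges_def)
  show ?thesis
  proof (cases "T = {}")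
    case True
    have "matching (induced_edges E (insert v (T \<union> U))) M"
      using M(1) MU by (auto simp: matching_def induced_edges_def)
    then show ?thesis using nu_ge[OF assms(1)] M True by force
  next
    case False
    then obtain u where u: "u \<in> T" by blast
    have uU: "u \<notin> U" using u assms(4) by blast
    have nin: "{v,u} \<notin> M" using MU assms(3) by blast
    have sub: "insert {v,u} M \<subseteq> induced_edges E (insert v (T \<union> U))"
      using MU u assms(5) by (auto simp: induced_edges_def)
    have disj: "\<forall>e\<in>insert {v,u} M. \<forall>f\<in>insert {v,u} M. e \<noteq> f \<longrightarrow> e \<inter> f = {}"
    proof (intro ballI impI)
      fix e f assume e: "e \<in> insert {v,u} M" and f: "f \<in> insert {v,u} M" and ne: "e \<noteq> f"
      show "e \<inter> f = {}"
      proof (cases "e = {v,u}")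
        case True then have "f \<in> M" using f ne by auto
        then have "f \<subseteq> U" using MU by auto
        then show ?thesis using True uU assms(3) by auto
      next
        case False then have eM: "e \<in> M" using e by auto
        show ?thesis
        proof (cases "f = {v,u}")
          case True
          have "e \<subseteq> U" using eM MU by auto
          then show ?thesis using True uU assms(3) by auto
        next
          case False then have "f \<in> M" using f by auto
          then show ?thesis using eM ne M(1) unfolding matching_def by blast
        qed
      qed
    qed
    have "matching (induced_edges E (insert v (T \<union> U))) (insert {v,u} M)"
      using sub disj unfolding matching_def by blast
    then have "card (insert {v,u} M) \<le> nu E (insert v (T \<union> U))" using nu_ge[OF assms(1)] by blast
    then show ?thesis using fM nin M(2) False by simp
  qed
qed

lemma finite_set_bern: "finite (set_pmf (bernoulli_pmf q))"
  by (rule finite_subset[of _ UNIV]) auto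

lemma exp_rs_insert:
  fixes f :: "_ \<Rightarrow> real"
  assumes "finite A" "x \<notin> A" "0 \<le> q" "q \<le> 1"
  shows "measure_pmf.expectation (random_subset (insert x A) q) f =
         q * measure_pmf.expectation (random_subset A q) (\<lambda>S. f (insert x S)) +
         (1 - q) * measure_pmf.expectation (random_subset A q) f"
  using assms
  by (simp add: rs_insert exp_pair finite_set_bern finite_set_rs case_prod_unfold)

lemma exp_rs_union:
  fixes f :: "_ \<Rightarrow> real"
  assumes "finite A" "finite B" "A \<inter> B = {}"
  shows "measure_pmf.expectation (random_subset (A \<union> B) q) f =
         measure_pmf.expectation (random_subset A q) (\<lambda>S.
           measure_pmf.expectation (random_subset B q) (\<lambda>T. f (S \<union> T)))"
  using assms
  by (simp add: rs_union exp_pair finite_set_rs case_prod_unfold)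

lemma exp_rs_empty:
  assumes "finite N" "0 \<le> q" "q \<le> 1"
  shows "measure_pmf.expectation (random_subset N q) (\<lambda>T. if T = {} then 1 else 1/2 :: real)
         = 1/2 + (1-q)^card N / 2"
  using assms(1)
proof (induction rule: finite_induct)
  case empty
  then show ?case by (simp add: random_subset_def)
next
  case (insert x F)
  then show ?case using assms(2,3)
    by (simp add: exp_rs_insert algebra_simps) (simp add: field_simps)
qed

lemma exp_le_aux: "0 \<le> (x::real) \<Longrightarrow> x \<le> 1/2 \<Longrightarrow> exp x \<le> 1 + 2 * x"
proof -
  assume a: "0 \<le> x" "x \<le> 1/2"
  have "1 - x \<le> exp (-x)" using exp_ge_add_one_self[of "-x"] by simp
  then have "exp x * (1 - x) \<le> exp x * exp (-x)" by (intro mult_left_mono) auto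
  then have "exp x * (1 - x) \<le> 1" by (simp add: exp_minus)
  then have "exp x \<le> 1 / (1 - x)" using a by (simp add: field_simps)
  also have "\<dots> \<le> 1 + 2 * x"
  proof -
    have "0 \<le> x * (1 - 2 * x)" using a by (intro mult_nonneg_nonneg) auto
    then have "1 \<le> (1 + 2 * x) * (1 - x)" by (simp add: algebra_simps)
    then show ?thesis using a by (simp add: divide_le_eq)
  qed
  finally show ?thesis .
qed

lemma key_ineq:
  fixes q m m1 m2 :: real and d :: nat
  assumes q0: "0 \<le> q" and q1: "q \<le> 1" and qd: "q * d \<le> 1" and m1: "m1 = m - d"
    and m2: "q^2 * (m - m2) \<le> q * d"
  shows "(1-q) * exp (-(q^2*m1/16)) + q * (1/2 + (1-q)^d/2) * exp (-(q^2*m2/16))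
         \<le> exp (-(q^2*m/16))"
proof -
  define a where "a = q * d"
  define X where "X = exp (-(q^2*m/16))"
  have a0: "0 \<le> a" and a1: "a \<le> 1" using q0 qd by (auto simp: a_def)
  have X0: "0 < X" by (simp add: X_def)
  have e1: "exp (-(q^2*m1/16)) = X * exp (q*a/16)"
    unfolding X_def a_def m1 by (simp add: exp_add[symmetric] algebra_simps power2_eq_square) (simp add: field_simps)
  have "exp (-(q^2*m2/16)) \<le> exp (-(q^2*m/16) + a/16)"
    using m2 unfolding a_def by (simp add: algebra_simps)
  also have "\<dots> = X * exp (a/16)" unfolding X_def by (rule exp_add)
  finally have e2: "exp (-(q^2*m2/16)) \<le> X * exp (a/16)" .
  have "(1-q)^d \<le> exp (-q) ^ d"
    using exp_ge_add_one_self[of "-q"] q1 by (intro power_mono) auto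
  also have "\<dots> = exp (-a)" by (simp add: a_def exp_of_nat_mult[symmetric] mult.commute)
  finally have p1: "(1-q)^d \<le> exp (-a)" .
  have "exp (-a) * (1 + a) \<le> exp (-a) * exp a"
    using exp_ge_add_one_self[of a] by (intro mult_left_mono) auto
  then have "exp (-a) * (1 + a) \<le> 1" by (simp add: exp_minus)
  then have p2: "exp (-a) \<le> 1 / (1 + a)" using a0 by (simp add: field_simps)
  have "0 \<le> a * (1 - a)" using a0 a1 by (intro mult_nonneg_nonneg) auto
  then have "1 \<le> (1 - a/2) * (1 + a)" by (simp add: algebra_simps)
  then have p3: "1 / (1 + a) \<le> 1 - a/2" using a0 by (simp add: divide_le_eq)
  have B: "1/2 + (1-q)^d/2 \<le> 1 - a/4" using p1 p2 p3 by linarith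
  have ex1: "exp (q*a/16) \<le> 1 + q*a/8"
    using exp_le_aux[of "q*a/16"] q0 q1 a0 a1 mult_mono[of q 1 a 1] by (simp add: mult.commute)
  have ex2: "exp (a/16) \<le> 1 + a/8"
    using exp_le_aux[of "a/16"] a0 a1 by simp
  have h1: "(1-q) * exp (-(q^2*m1/16)) \<le> (1-q) * (X * (1 + q*a/8))"
    unfolding e1 using q1 X0 ex1 by (intro mult_left_mono) auto
  have h2: "q * (1/2 + (1-q)^d/2) * exp (-(q^2*m2/16)) \<le> q * ((1 - a/4) * (X * (1 + a/8)))"
  proof -
    have "(1/2 + (1-q)^d/2) * exp (-(q^2*m2/16)) \<le> (1 - a/4) * (X * (1 + a/8))"
      using B e2 ex2 X0 a1 q1
      by (intro mult_mono order.trans[OF e2]) (auto intro: mult_left_mono)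
    then show ?thesis using q0 by (simp add: mult.assoc mult_left_mono)
  qed
  have h3: "(1-q) * (X * (1 + q*a/8)) + q * ((1 - a/4) * (X * (1 + a/8)))
            = X * (1 - (q*q*a/8 + q*a*a/32))"
    by (simp add: algebra_simps) (simp add: field_simps)
  have t0: "0 \<le> q*q*a/8 + q*a*a/32" using q0 a0 by simp
  have "X * (1 - (q*q*a/8 + q*a*a/32)) \<le> X * 1"
    apply (rule mult_left_mono) using t0 X0 by linarith+
  then show ?thesis using h1 h2 h3 unfolding X_def by linarith
qed

lemma main_bound:
  fixes q :: real
  assumes "finite V" "\<forall>e\<in>E. e \<subseteq> V \<and> card e = 2" "0 \<le> q" "q \<le> 1"
    "\<forall>v\<in>V. q * degree E v \<le> 1"
  shows "measure_pmf.expectation (random_subset V q) (\<lambda>S. (1/2::real)^nu E S)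
         \<le> exp (-(q^2 * card E / 16))"
  using assms
proof (induction "card V" arbitrary: V E rule: less_induct)
  case less
  have finE: "finite E" using less.prems(1,2) by (intro finite_subset[of E "Pow V"]) auto
  have fr: "finite (set_pmf (random_subset V q))" using finite_set_rs less.prems(1) .
  show ?case
  proof (cases "E = {}")
    case True
    then show ?thesis using fr by (auto intro!: exp_le_1 power_le_one)
  next
    case False
    then obtain e where e: "e \<in> E" by blast
    then have "card e = 2" using less.prems by auto
    then obtain v w where vw: "e = {v,w}" "v \<noteq> w" by (auto simp: card_2_iff)
    have vV: "v \<in> V" using e vw less.prems(2) by auto
    define N where "N = {u\<in>V. {v,u} \<in> E}"
    define V' where "V' = V - {v}"
    define V'' where "V'' = V - insert v N"
    define E1 where "E1 = {e\<in>E. v \<notin> e}"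
    define E2 where "E2 = {e\<in>E. e \<subseteq> V''}"
    define d where "d = card N"
    have vN: "v \<notin> N" using less.prems(2) by (auto simp: N_def)
    have finN: "finite N" using less.prems(1) by (simp add: N_def)
    have vedges: "{e\<in>E. v\<in>e} = (\<lambda>u. {v,u}) ` N"
    proof
      show "{e\<in>E. v\<in>e} \<subseteq> (\<lambda>u. {v,u}) ` N"
      proof
        fix x assume x: "x \<in> {e\<in>E. v\<in>e}"
        then have "card x = 2" "x \<subseteq> V" using less.prems(2) by auto
        then obtain a b where ab: "x = {a,b}" "a \<noteq> b" by (auto simp: card_2_iff)
        then obtain u where u: "x = {v,u}" using x by auto
        then have "u \<in> N" using x \<open>x \<subseteq> V\<close> by (auto simp: N_def)
        then show "x \<in> (\<lambda>u. {v,u}) ` N" using u by blast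
      qed
    next
      show "(\<lambda>u. {v,u}) ` N \<subseteq> {e\<in>E. v\<in>e}" by (auto simp: N_def)
    qed
    have inj: "inj_on (\<lambda>u. {v,u}) N" by (auto simp: inj_on_def doubleton_eq_iff)
    have degv: "degree E v = d"
      unfolding degree_def vedges d_def using card_image[OF inj] .
    have qd: "q * d \<le> 1" using less.prems(5) vV degv by auto
    have E1eq: "E1 = E - {e\<in>E. v\<in>e}" by (auto simp: E1_def)
    have cE1: "real (card E1) = real (card E) - real d"
    proof -
      have "card E1 = card E - d" unfolding E1eq using finE degv
        by (subst card_Diff_subset) (auto simp: degree_def)
      moreover have "d \<le> card E" using finE degv unfolding degree_def
        by (metis (no_types, lifting) card_mono mem_Collect_eq subsetI)
      ultimately show ?thesis by simp
    qed
    have E2sub: "E - E2 \<subseteq> (\<Union>u\<in>N. {e\<in>E. u\<in>e})"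
    proof
      fix x assume x: "x \<in> E - E2"
      then have xV: "x \<subseteq> V" using less.prems(2) by auto
      then obtain y where y: "y \<in> x" "y \<in> insert v N" using x by (auto simp: E2_def V''_def)
      show "x \<in> (\<Union>u\<in>N. {e\<in>E. u\<in>e})"
      proof (cases "y = v")
        case True
        then have "x \<in> (\<lambda>u. {v,u}) ` N" using vedges x y by blast
        then show ?thesis using x by auto
      next
        case False
        then show ?thesis using x y by auto
      qed
    qed
    have "card (E - E2) \<le> card (\<Union>u\<in>N. {e\<in>E. u\<in>e})"
      using finE finN E2sub by (intro card_mono) auto
    also have "\<dots> \<le> (\<Sum>u\<in>N. card {e\<in>E. u\<in>e})"
      using finN by (rule card_UN_le)
    finally have cD: "card (E - E2) \<le> (\<Sum>u\<in>N. degree E u)" by (simp add: degree_def)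
    have "q * card (E - E2) \<le> q * (\<Sum>u\<in>N. degree E u)"
      using cD less.prems(3) by (intro mult_left_mono) (auto simp flip: of_nat_sum)
    also have "\<dots> = (\<Sum>u\<in>N. q * degree E u)" by (simp add: sum_distrib_left)
    also have "\<dots> \<le> (\<Sum>u\<in>N. 1)" using less.prems(5) by (intro sum_mono) (auto simp: N_def)
    finally have qD: "q * card (E - E2) \<le> d" by (simp add: d_def)
    have cE2: "real (card E) - real (card E2) = real (card (E - E2))"
    proof -
      have "card E2 \<le> card E" using finE by (intro card_mono) (auto simp: E2_def)
      moreover have "card (E - E2) = card E - card E2" using finE
        by (intro card_Diff_subset) (auto simp: E2_def intro: finite_subset)
      ultimately show ?thesis by simp
    qed
    have m2: "q^2 * (real (card E) - real (card E2)) \<le> q * d"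
      unfolding cE2 using qD less.prems(3) by (simp add: power2_eq_square mult.assoc mult_left_mono)
    have finV': "finite V'" and finV'': "finite V''" using less.prems(1) by (auto simp: V'_def V''_def)
    have IH1: "measure_pmf.expectation (random_subset V' q) (\<lambda>S. (1/2::real)^nu E1 S)
         \<le> exp (-(q^2 * card E1 / 16))"
    proof (rule less.hyps)
      show "card V' < card V" using vV less.prems(1) card_gt_0_iff[of V] by (auto simp: V'_def)
      show "\<forall>e\<in>E1. e \<subseteq> V' \<and> card e = 2" using less.prems(2) by (auto simp: E1_def V'_def)
      show "\<forall>u\<in>V'. q * degree E1 u \<le> 1"
      proof
        fix u assume "u \<in> V'"
        then have "q * degree E u \<le> 1" using less.prems(5) by (auto simp: V'_def)
        moreover have "degree E1 u \<le> degree E u" unfolding degree_def E1_def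
          using finE by (intro card_mono) auto
        ultimately show "q * degree E1 u \<le> 1" using less.prems(3)
          by (meson mult_left_mono of_nat_le_iff order_trans)
      qed
    qed (use finV' less.prems in auto)
    have IH2: "measure_pmf.expectation (random_subset V'' q) (\<lambda>S. (1/2::real)^nu E2 S)
         \<le> exp (-(q^2 * card E2 / 16))"
    proof (rule less.hyps)
      show "card V'' < card V" using vV less.prems(1) by (intro psubset_card_mono) (auto simp: V''_def)
      show "\<forall>e\<in>E2. e \<subseteq> V'' \<and> card e = 2" using less.prems(2) by (auto simp: E2_def)
      show "\<forall>u\<in>V''. q * degree E2 u \<le> 1"
      proof
        fix u assume "u \<in> V''"
        then have "q * degree E u \<le> 1" using less.prems(5) by (auto simp: V''_def)
        moreover have "degree E2 u \<le> degree E u" unfolding degree_def E2_def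
          using finE by (intro card_mono) auto
        ultimately show "q * degree E2 u \<le> 1" using less.prems(3)
          by (meson mult_left_mono of_nat_le_iff order_trans)
      qed
    qed (use finV'' less.prems in auto)
    have Vins: "V = insert v V'" using vV by (auto simp: V'_def)
    have partA: "measure_pmf.expectation (random_subset V' q) (\<lambda>S. (1/2::real)^nu E S)
               = measure_pmf.expectation (random_subset V' q) (\<lambda>S. (1/2::real)^nu E1 S)"
    proof (rule exp_cong_pmf)
      fix S assume "S \<in> set_pmf (random_subset V' q)"
      then have "S \<subseteq> V'" using set_rs by blast
      then have "induced_edges E S = induced_edges E1 S"
        by (auto simp: induced_edges_def E1_def V'_def)
      then show "(1/2::real)^nu E S = (1/2)^nu E1 S" by (simp add: nu_def)
    qed
    define c where "c = (\<lambda>T::'a set. if T = {} then 1 else 1/2::real)"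
    have V'split: "V' = N \<union> V''" using vN by (auto simp: V'_def V''_def N_def)
    have partB: "measure_pmf.expectation (random_subset V' q) (\<lambda>S. (1/2::real)^nu E (insert v S))
       \<le> (1/2 + (1-q)^d/2) * exp (-(q^2 * card E2 / 16))"
    proof -
      have "measure_pmf.expectation (random_subset V' q) (\<lambda>S. (1/2::real)^nu E (insert v S))
        = measure_pmf.expectation (random_subset N q) (\<lambda>T.
           measure_pmf.expectation (random_subset V'' q) (\<lambda>U. (1/2::real)^nu E (insert v (T \<union> U))))"
        unfolding V'split using finN finV'' by (intro exp_rs_union) (auto simp: V''_def)
      also have "\<dots> \<le> measure_pmf.expectation (random_subset N q) (\<lambda>T.
           measure_pmf.expectation (random_subset V'' q) (\<lambda>U. c T * (1/2::real)^nu E2 U))"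
      proof (rule exp_mono_pmf[OF finite_set_rs[OF finN]], rule exp_mono_pmf[OF finite_set_rs[OF finV'']])
        fix T U assume T: "T \<in> set_pmf (random_subset N q)" and U: "U \<in> set_pmf (random_subset V'' q)"
        have TN: "T \<subseteq> N" using T set_rs by blast
        have UV: "U \<subseteq> V''" using U set_rs by blast
        have le: "nu E2 U + (if T = {} then 0 else 1) \<le> nu E (insert v (T \<union> U))"
          using TN UV by (intro nu_step finE) (auto simp: E2_def V''_def N_def)
        have "(1/2::real)^nu E (insert v (T \<union> U)) \<le> (1/2)^(nu E2 U + (if T = {} then 0 else 1))"
          by (rule power_decreasing[OF le]) auto
        also have "\<dots> = c T * (1/2)^nu E2 U" by (simp add: c_def power_add)
        finally show "(1/2::real)^nu E (insert v (T \<union> U)) \<le> c T * (1/2)^nu E2 U" .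
      qed
      also have "\<dots> = measure_pmf.expectation (random_subset N q) c *
           measure_pmf.expectation (random_subset V'' q) (\<lambda>U. (1/2::real)^nu E2 U)"
        by simp
      also have "\<dots> \<le> (1/2 + (1-q)^d/2) * exp (-(q^2 * card E2 / 16))"
      proof -
        have "measure_pmf.expectation (random_subset N q) c = 1/2 + (1-q)^d/2"
          unfolding c_def d_def using exp_rs_empty finN less.prems(3,4) by blast
        moreover have "0 \<le> 1/2 + (1-q)^d/2" using less.prems(4) by simp
        ultimately show ?thesis using IH2 by (simp add: mult_left_mono)
      qed
      finally show ?thesis .
    qed
    have "measure_pmf.expectation (random_subset V q) (\<lambda>S. (1/2::real)^nu E S)
      = q * measure_pmf.expectation (random_subset V' q) (\<lambda>S. (1/2::real)^nu E (insert v S))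
        + (1 - q) * measure_pmf.expectation (random_subset V' q) (\<lambda>S. (1/2::real)^nu E S)"
      unfolding Vins using finV' less.prems(3,4) by (intro exp_rs_insert) (auto simp: V'_def)
    also have "\<dots> \<le> q * ((1/2 + (1-q)^d/2) * exp (-(q^2 * card E2 / 16)))
        + (1 - q) * exp (-(q^2 * card E1 / 16))"
      unfolding partA using partB IH1 less.prems(3,4)
      by (intro add_mono mult_left_mono) auto
    also have "\<dots> \<le> exp (-(q^2 * card E / 16))"
      using key_ineq[OF less.prems(3,4) qd cE1 m2] by (simp add: mult.assoc add.commute)
    finally show ?thesis .
  qed
qed

theorem lemma7p2:
  fixes V :: "'a set" and E :: "'a set set" and q :: real
  assumes "simple_graph V E"
    and "0 \<le> q" and "q \<le> 1"
    and "q * real (max_degree V E) \<le> 1"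
  shows "measure_pmf.prob (random_subset V q)
           {S. \<exists>M. matching (induced_edges E S) M \<and>
                    real (card M) \<ge> q\<^sup>2 * real (card E) / 20}
         \<ge> 1 - exp (- (q\<^sup>2 * real (card E) / 200))"
proof -
  have finV: "finite V" and edges: "\<forall>e\<in>E. e \<subseteq> V \<and> card e = 2"
    using assms(1) by (auto simp: simple_graph_def)
  have finE: "finite E" using finV edges by (intro finite_subset[of E "Pow V"]) auto
  have deg: "\<forall>v\<in>V. q * degree E v \<le> 1"
  proof
    fix v assume "v \<in> V"
    then have "degree E v \<le> max_degree V E" unfolding max_degree_def using finV by (intro Max_ge) auto
    then have "q * degree E v \<le> q * max_degree V E" using assms(2) by (intro mult_left_mono) auto
    then show "q * degree E v \<le> 1" using assms(4) by linarith
  qed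
  define p where "p = random_subset V q"
  define m where "m = real (card E)"
  define k where "k = q\<^sup>2 * m / 20"
  define \<Phi> where "\<Phi> = (\<lambda>S. (1/2::real)^nu E S)"
  define good where "good = {S. \<exists>M. matching (induced_edges E S) M \<and> real (card M) \<ge> q\<^sup>2 * real (card E) / 20}"
  have EPhi: "measure_pmf.expectation p \<Phi> \<le> exp (-(q\<^sup>2 * m / 16))"
    unfolding p_def \<Phi>_def m_def using main_bound[OF finV edges assms(2,3) deg] .
  have ln2: "ln (2::real) \<le> 1" using ln_le_minus_one[of "2::real"] by simp
  have bad: "UNIV - good \<subseteq> {S. exp (-k) \<le> \<Phi> S}"
  proof
    fix S assume S: "S \<in> UNIV - good"
    obtain M where M: "matching (induced_edges E S) M" "card M = nu E S" using nu_ex[OF finE] by blast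
    have lt: "real (nu E S) < k"
    proof (rule ccontr)
      assume "\<not> real (nu E S) < k"
      then have "k \<le> real (card M)" using M(2) by simp
      then have "S \<in> good" using M(1) unfolding good_def k_def m_def by blast
      then show False using S by blast
    qed
    have "\<Phi> S = exp (real (nu E S) * (- ln 2))"
    proof -
      have e2: "exp (- ln (2::real)) = 1/2" by (simp add: exp_minus inverse_eq_divide)
      show ?thesis unfolding \<Phi>_def exp_of_nat_mult e2 ..
    qed
    also have "exp (-k) \<le> exp (real (nu E S) * (- ln 2))"
    proof -
      have "real (nu E S) * ln 2 \<le> real (nu E S) * 1" using ln2 by (intro mult_left_mono) auto
      then show ?thesis using lt by simp
    qed
    ultimately show "S \<in> {S. exp (-k) \<le> \<Phi> S}" by simp
  qed
  have "measure_pmf.prob p (UNIV - good) \<le> measure_pmf.prob p {S. exp (-k) \<le> \<Phi> S}"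
    using bad by (intro measure_pmf.finite_measure_mono) auto
  also have "\<dots> \<le> measure_pmf.expectation p \<Phi> / exp (-k)"
  proof -
    have int: "integrable (measure_pmf p) \<Phi>"
      unfolding p_def by (rule integrable_measure_pmf_finite[OF finite_set_rs[OF finV]])
    have "measure (measure_pmf p) {x \<in> space (measure_pmf p). exp (-k) \<le> \<Phi> x}
          \<le> measure_pmf.expectation p \<Phi> / exp (-k)"
      by (rule integral_Markov_inequality_measure[OF int, where A=UNIV]) (auto simp: \<Phi>_def)
    then show ?thesis by simp
  qed
  also have "\<dots> \<le> exp (-(q\<^sup>2 * m / 16)) / exp (-k)"
    using EPhi by (intro divide_right_mono) auto
  also have "\<dots> = exp (-(q\<^sup>2 * m / 16) - (-k))" by (rule exp_diff[symmetric])
  also have "\<dots> = exp (k - q\<^sup>2 * m / 16)" by simp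
  also have "\<dots> \<le> exp (-(q\<^sup>2 * m / 200))"
  proof -
    have "0 \<le> q\<^sup>2 * m" by (simp add: m_def)
    then show ?thesis unfolding k_def by (simp add: mult.commute)
  qed
  finally have pb: "measure_pmf.prob p (UNIV - good) \<le> exp (-(q\<^sup>2 * m / 200))" .
  have "measure_pmf.prob p (UNIV - good) = 1 - measure_pmf.prob p good"
    using measure_pmf.prob_compl[of good p] by simp
  then show ?thesis using pb unfolding good_def p_def m_def by linarith
qed

end
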